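(* For every $r\in(0,1/2)$ there is an integer $N\ge2$ with the following property. Let $\langle p_i/q_i\rangle_{i=1}^\infty$ belong to $\mathcal{QG}_N$, with expansions $p_i/q_i=[\langle b_{i,j}:\varepsilon_{i,j}\rangle_{j=1}^{m_i}]$, and define $k_1=1$ and $k_n=\prod_{i=1}^{n-1}q_{i,m_i}$ for $n\ge2$. Then for every $i\ge1$ and every $z\in\mathbb{C}$ with \[\left|z-\Big(\frac{p_i}{q_i}-i\,\frac{k_i}{q_i}\,\frac{\log 2}{2\pi}\Big)\right|\le\frac{\log2}{2\pi}\,\frac{k_i}{q_i}\] (where $i$ inside the parentheses denotes $\sqrt{-1}$), we have: (a) for every integer $n_i$ with $0\le n_i\le m_i-2$, $|G^{\circ n_i}(z)|\le r$, and $\arg G^{\circ n_i}(z)\in[-\pi/4,\pi/4]$ if $\operatorname{Re}G^{\circ n_i}(z)>0$, $\arg G^{\circ n_i}(z)\in[3\pi/4,5\pi/4]$ if $\operatorname{Re}G^{\circ n_i}(z)<0$; (b) $|G^{\circ(m_i-1)}(z)|\le r$.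
   Context: For $x\in\mathbb{R}$, $[x]$ is the closest integer to $x$ with the convention $x\in([x]-1/2,[x]+1/2]$ for $x>0$, $x\in[[x]-1/2,[x]+1/2)$ for $x<0$, $[0]=0$. $G(z)=-1/z-[\operatorname{Re}(-1/z)]$ for $z\ne0$. For integers $b_j\ge2$ and signs $\varepsilon_j$, $[\langle b_j:\varepsilon_j\rangle_{j=1}^m]=\cfrac{\varepsilon_1}{b_1+\cfrac{\varepsilon_2}{\ddots+\cfrac{\varepsilon_m}{b_m}}}$. For a nonzero rational $x\in[-1/2,1/2]$: set $x_1=x$, $x_{k+1}=-1/x_k-[-1/x_k]$ until $x_{m+1}=0$; $b_k=|[-1/x_k]|$, $\varepsilon_1=\operatorname{sign}(x_1)$, $\varepsilon_k=-\operatorname{sign}(x_{k-1})\operatorname{sign}(x_k)$ ($k\ge2$); then $x=[\langle b_k:\varepsilon_k\rangle_{k=1}^m]$ (its modified continued fraction expansion). For a sequence of nonzero rationals $p_i/q_i\in(-1/2,1/2]$ (lowest terms, $q_i>0$), let $p_i/q_i=[\langle b_{i,j}:\varepsilon_{i,j}\rangle_{j=1}^{m_i}]$ be this expansion and $q_{i,l}>0$ the denominator in lowest terms of $[\langle b_{i,j}:\varepsilon_{i,j}\rangle_{j=1}^l]$ (so $q_{i,m_i}=q_i$). For $N\ge2$, $\mathcal{QG}_N$ is the set of such sequences satisfying $b_{1,1}\ge N$, $b_{i+1,1}\ge q_{i,m_i}^2$ for all $i\ge1$, and $b_{i,j+1}\ge b_{i,j}^2$ for all $i\ge1$, $1\le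 j\le m_i-1$. *)

theory Defs
  imports "HOL-Analysis.Analysis"
begin

text \<open>Nearest integer [x]: for x > 0, x in ([x]-1/2, [x]+1/2];
  for x < 0, x in [[x]-1/2, [x]+1/2); [0] = 0.\<close>
definition nint :: "'a::floor_ceiling \<Rightarrow> int" where
  "nint x = (if x > 0 then \<lceil>x - 1/2\<rceil> else if x < 0 then \<lfloor>x + 1/2\<rfloor> else 0)"

text \<open>The complex map G(z) = -1/z - [Re(-1/z)] (for z = 0 the formula gives 0).\<close>
definition G :: "complex \<Rightarrow> complex" where
  "G z = -1/z - of_int (nint (Re (-1/z)))"

definition Tq :: "rat \<Rightarrow> rat" where
  "Tq x = -1/x - of_int (nint (-1/x))"

definition mcf_x :: "rat \<Rightarrow> nat \<Rightarrow> rat" where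
  "mcf_x x k = (Tq ^^ (k - 1)) x"

definition mcf_len :: "rat \<Rightarrow> nat" where
  "mcf_len x = (LEAST m. m \<ge> 1 \<and> mcf_x x (m + 1) = 0)"

definition mcf_b :: "rat \<Rightarrow> nat \<Rightarrow> int" where
  "mcf_b x k = \<bar>nint (-1 / mcf_x x k)\<bar>"

definition sgnq :: "rat \<Rightarrow> int" where
  "sgnq y = (if y > 0 then 1 else if y < 0 then -1 else 0)"

definition mcf_eps :: "rat \<Rightarrow> nat \<Rightarrow> int" where
  "mcf_eps x k = (if k \<le> 1 then sgnq (mcf_x x 1)
                  else - sgnq (mcf_x x (k - 1)) * sgnq (mcf_x x k))"

text \<open>Value of the finite continued fraction [<b_j : eps_j>] given as a list of pairs (b_j, eps_j).\<close>
fun cf_val :: "(int \<times> int) list \<Rightarrow> rat" where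
  "cf_val [] = 0"
| "cf_val ((b, e) # rest) = of_int e / (of_int b + cf_val rest)"

definition mcf_conv :: "rat \<Rightarrow> nat \<Rightarrow> rat" where
  "mcf_conv x l = cf_val (map (\<lambda>j. (mcf_b x j, mcf_eps x j)) [1..<l + 1])"

definition mcf_den :: "rat \<Rightarrow> nat \<Rightarrow> int" where
  "mcf_den x l = snd (quotient_of (mcf_conv x l))"

text \<open>The class QG_N for sequences indexed by i >= 1 (the value at index 0 is irrelevant).\<close>
definition QG :: "nat \<Rightarrow> (nat \<Rightarrow> rat) \<Rightarrow> bool" where
  "QG N x \<longleftrightarrow>
     (\<forall>i\<ge>1. x i \<noteq> 0 \<and> -1/2 < x i \<and> x i \<le> 1/2) \<and>
     mcf_b (x 1) 1 \<ge> int N \<and>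
     (\<forall>i\<ge>1. mcf_b (x (i + 1)) 1 \<ge> (mcf_den (x i) (mcf_len (x i)))\<^sup>2) \<and>
     (\<forall>i\<ge>1. \<forall>j. 1 \<le> j \<and> j \<le> mcf_len (x i) - 1 \<longrightarrow>
        mcf_b (x i) (j + 1) \<ge> (mcf_b (x i) j)\<^sup>2)"

definition has_arg_in :: "complex \<Rightarrow> real \<Rightarrow> real \<Rightarrow> bool" where
  "has_arg_in w a b \<longleftrightarrow> (\<exists>t. a \<le> t \<and> t \<le> b \<and> w = complex_of_real (cmod w) * cis t)"

end

theory Submission
  imports Defs
begin


lemma nint_bound:
  fixes t :: "'a::floor_ceiling"
  shows "\<bar>t - of_int (nint t)\<bar> \<le> 1/2"
proof -
  have c1: "of_int \<lceil>t - 1/2\<rceil> \<ge> t - 1/2" "of_int \<lceil>t - 1/2\<rceil> < t - 1/2 + 1"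
    using ceiling_correct[of "t - 1/2"] by linarith+
  have f1: "of_int \<lfloor>t + 1/2\<rfloor> \<le> t + 1/2" "t + 1/2 < of_int \<lfloor>t + 1/2\<rfloor> + 1"
    using floor_correct[of "t + 1/2"] by linarith+
  consider "t > 0" | "t < 0" | "t = 0" by linarith
  then show ?thesis
  proof cases
    case 1
    then have e: "nint t = \<lceil>t - 1/2\<rceil>" by (simp add: nint_def)
    show ?thesis unfolding e abs_le_iff using c1 by linarith
  next
    case 2
    then have e: "nint t = \<lfloor>t + 1/2\<rfloor>" by (simp add: nint_def)
    show ?thesis unfolding e abs_le_iff using f1 by linarith
  qed (simp add: nint_def)
qed

lemma nint_unique:
  fixes t :: real and M :: int
  assumes "of_int M - 1/2 < t" "t < of_int M + 1/2"
  shows "nint t = M"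
proof -
  consider "t > 0" | "t < 0" | "t = 0" by linarith
  then show ?thesis
  proof cases
    case 1
    have "\<lceil>t - 1/2\<rceil> = M" using assms by (intro ceiling_unique) auto
    then show ?thesis using 1 by (simp add: nint_def)
  next
    case 2
    have "\<lfloor>t + 1/2\<rfloor> = M" using assms by (intro floor_unique) auto
    then show ?thesis using 2 by (simp add: nint_def)
  next
    case 3
    have h1: "of_int M < (of_int 1::real)" "of_int (-1) < (of_int M::real)" using assms 3 by simp_all
    have "M < 1" using h1(1) by (simp only: of_int_less_iff)
    moreover have "-1 < M" using h1(2) by (simp only: of_int_less_iff)
    ultimately have "M = 0" by simp
    then show ?thesis using 3 by (simp add: nint_def)
  qed
qed

lemma nint_pos:
  fixes t :: "'a::floor_ceiling"
  assumes "t \<ge> 1" shows "nint t > 0"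
proof -
  have "of_int \<lceil>t - 1/2\<rceil> > (0::'a)" using assms ceiling_correct[of "t - 1/2"] by linarith
  then have "\<lceil>t - 1/2\<rceil> > 0" by simp
  then show ?thesis using assms by (simp add: nint_def)
qed

lemma nint_neg:
  fixes t :: "'a::floor_ceiling"
  assumes "t \<le> -1" shows "nint t < 0"
proof -
  have "\<lfloor>t + 1/2\<rfloor> < 0" using assms by (simp add: floor_less_iff)
  then show ?thesis using assms by (simp add: nint_def)
qed

lemma Tq_bound: "\<bar>Tq y\<bar> \<le> 1/2"
  unfolding Tq_def using nint_bound[of "-1/y"] by simp

lemma mcf_x_1 [simp]: "mcf_x x 1 = x" by (simp add: mcf_x_def)
lemma mcf_x_Suc0 [simp]: "mcf_x x (Suc 0) = x" by (simp add: mcf_x_def)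
lemma mcf_x_Suc: "j \<ge> 1 \<Longrightarrow> mcf_x x (Suc j) = Tq (mcf_x x j)"
  by (cases j) (auto simp: mcf_x_def)

lemma den_Tq:
  assumes "y \<noteq> 0"
  shows "snd (quotient_of (Tq y)) = \<bar>fst (quotient_of y)\<bar>"
proof -
  obtain p d where pd: "quotient_of y = (p, d)" by force
  have d: "d > 0" using quotient_of_denom_pos[OF pd] .
  have cop: "coprime p d" using quotient_of_coprime[OF pd] .
  have y: "y = Fract p d" using pd quotient_of_div[OF pd] by (simp add: Fract_of_int_quotient)
  have p: "p \<noteq> 0" using assms y by (auto simp: Fract_of_int_quotient)
  define n where "n = nint (-1/y)"
  have "Tq y = -1/y - of_int n" by (simp add: Tq_def n_def)
  also have "\<dots> = Fract (-d - n*p) p"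
    using p d by (simp add: y Fract_of_int_quotient field_simps)
  finally have Tqy: "Tq y = Fract (-d - n*p) p" .
  moreover have cop2: "coprime (-d - n*p) p"
  proof -
    have "coprime d p" using cop by (simp add: coprime_commute)
    have "gcd p (n*p + d) = gcd p d" by (rule gcd_add_mult)
    then have "coprime (n*p + d) p" using \<open>coprime d p\<close>
      by (simp add: coprime_iff_gcd_eq_1 gcd.commute)
    moreover have "n*p + d = d + n*p" by simp
    ultimately have "coprime (d + n*p) p" by metis
    then have "coprime (-(d + n*p)) p" by (simp only: coprime_minus_left_iff)
    moreover have "-(d + n*p) = -d - n*p" by simp
    ultimately show ?thesis by simp
  qed
  ultimately show ?thesis
  proof (cases "p > 0")
    case True
    then show ?thesis using Tqy cop2 pd by (simp add: quotient_of_Fract)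
  next
    case False
    then have "p < 0" using p by simp
    have "Fract (-d - n*p) p = Fract (d + n*p) (-p)" using p by (simp add: Fract_of_int_quotient field_simps)
    moreover have "coprime (-(-d - n*p)) (-p)" using cop2 by (simp only: coprime_minus_left_iff coprime_minus_right_iff)
    then have "coprime (d + n*p) (-p)" by (simp add: ac_simps)
    ultimately show ?thesis using Tqy \<open>p < 0\<close> pd by (simp add: quotient_of_Fract)
  qed
qed




lemma mcf_x_half:
  assumes "\<bar>x\<bar> \<le> 1/2" "j \<ge> 1"
  shows "\<bar>mcf_x x j\<bar> \<le> 1/2"
proof (cases j)
  case 0 then show ?thesis using assms by simp
next
  case (Suc i)
  show ?thesis
  proof (cases i)
    case 0 then show ?thesis using Suc assms by (simp add: mcf_x_1)
  next
    case (Suc i')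
    then have "mcf_x x j = Tq (mcf_x x i)" using \<open>j = Suc i\<close> mcf_x_Suc[of i x] by simp
    then show ?thesis using Tq_bound by simp
  qed
qed

lemma num_lt_den:
  assumes "\<bar>y\<bar> \<le> 1/2"
  shows "\<bar>fst (quotient_of y)\<bar> < snd (quotient_of y)"
proof -
  obtain p d where pd: "quotient_of y = (p, d)" by force
  have d: "d > 0" using quotient_of_denom_pos[OF pd] .
  have y: "y = of_int p / of_int d" using quotient_of_div[OF pd] .
  have "\<bar>of_int p\<bar> / of_int d \<le> (1/2::rat)" using assms d by (simp add: y abs_divide)
  then have "\<bar>of_int p\<bar> \<le> (of_int d / 2::rat)" using d by (simp add: field_simps)
  then have "of_int \<bar>p\<bar> < (of_int d::rat)" using d by simp
  then show ?thesis using pd by simp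
qed

lemma den_ge_inv:
  assumes "y \<noteq> 0"
  shows "1 / \<bar>y\<bar> \<le> of_int (snd (quotient_of y))"
proof -
  obtain p d where pd: "quotient_of y = (p, d)" by force
  have d: "d > 0" using quotient_of_denom_pos[OF pd] .
  have y: "y = of_int p / of_int d" using quotient_of_div[OF pd] .
  have p: "p \<noteq> 0" using assms y by auto
  have "1 / \<bar>y\<bar> = of_int d / of_int \<bar>p\<bar>" using d by (simp add: y abs_divide)
  also have "\<dots> \<le> of_int d" using p d by (simp add: divide_le_eq)
  finally show ?thesis using pd by simp
qed

lemma den_step:
  assumes "y \<noteq> 0"
  shows "of_int (snd (quotient_of (Tq y))) = \<bar>y\<bar> * of_int (snd (quotient_of y))"
proof -
  obtain p d where pd: "quotient_of y = (p, d)" by force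
  have d: "d > 0" using quotient_of_denom_pos[OF pd] .
  have y: "y = of_int p / of_int d" using quotient_of_div[OF pd] .
  show ?thesis using den_Tq[OF assms] pd d by (simp add: y abs_divide)
qed

lemma mcf_terminates:
  assumes "x \<noteq> 0" "\<bar>x\<bar> \<le> 1/2"
  shows "\<exists>m\<ge>1. mcf_x x (m + 1) = 0"
proof (rule ccontr)
  assume "\<not> ?thesis"
  then have nz: "mcf_x x j \<noteq> 0" if j1: "j \<ge> 1" for j
  proof (cases "j = 1")
    case True then show ?thesis using assms by simp
  next
    case False
    then obtain i where "j = i + 1" "i \<ge> 1" using j1 by (cases j) auto
    then show ?thesis using \<open>\<not> (\<exists>m\<ge>1. mcf_x x (m + 1) = 0)\<close> by auto
  qed
  define d where "d j = snd (quotient_of (mcf_x x j))" for j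
  have dec: "d (Suc j) < d j" if "j \<ge> 1" for j
  proof -
    have "d (Suc j) = \<bar>fst (quotient_of (mcf_x x j))\<bar>"
      using den_Tq[OF nz[OF that]] mcf_x_Suc[OF that] by (simp add: d_def)
    also have "\<dots> < d j" unfolding d_def by (rule num_lt_den[OF mcf_x_half[OF assms(2) that]])
    finally show ?thesis .
  qed
  have bound: "d (Suc j) + int j \<le> d 1" for j
  proof (induction j)
    case 0 then show ?case by simp
  next
    case (Suc j)
    have "d (Suc (Suc j)) < d (Suc j)" using dec[of "Suc j"] by simp
    then show ?case using Suc by simp
  qed
  have d1: "d 1 > 0" unfolding d_def by (rule quotient_of_denom_pos')
  have "d (Suc (nat (d 1))) + int (nat (d 1)) \<le> d 1" by (rule bound)
  then have "d (Suc (nat (d 1))) \<le> 0" using d1 by simp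
  moreover have "d (Suc (nat (d 1))) > 0" unfolding d_def by (rule quotient_of_denom_pos')
  ultimately show False by simp
qed

lemma mcf_len_props:
  assumes "x \<noteq> 0" "\<bar>x\<bar> \<le> 1/2"
  shows "mcf_len x \<ge> 1" "mcf_x x (mcf_len x + 1) = 0"
    "\<And>j. 1 \<le> j \<Longrightarrow> j \<le> mcf_len x \<Longrightarrow> mcf_x x j \<noteq> 0"
proof -
  have ex: "\<exists>m. m \<ge> 1 \<and> mcf_x x (m + 1) = 0" using mcf_terminates[OF assms] by auto
  show "mcf_len x \<ge> 1" "mcf_x x (mcf_len x + 1) = 0"
    using LeastI_ex[OF ex] by (simp_all add: mcf_len_def)
  fix j assume j: "1 \<le> j" "j \<le> mcf_len x"
  show "mcf_x x j \<noteq> 0"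
  proof (cases "j = 1")
    case True then show ?thesis using assms by (simp add: mcf_x_1)
  next
    case False
    then obtain i where i: "j = i + 1" "i \<ge> 1" using j by (cases j) auto
    have "i < mcf_len x" using i j by simp
    then have "\<not> (i \<ge> 1 \<and> mcf_x x (i + 1) = 0)" unfolding mcf_len_def by (rule not_less_Least)
    then show ?thesis using i by simp
  qed
qed




lemma mcf_rec: "j \<ge> 1 \<Longrightarrow> mcf_x x (Suc j) = -1/mcf_x x j - of_int (nint (-1/mcf_x x j))"
  by (simp add: mcf_x_Suc Tq_def)

lemma nint_sign:
  fixes y :: rat
  assumes "y \<noteq> 0" "\<bar>y\<bar> \<le> 1/2"
  shows "nint (-1/y) = - sgnq y * \<bar>nint (-1/y)\<bar>"
proof (cases "y > 0")
  case True
  then have "1/y \<ge> 2" using assms by (simp add: le_divide_eq)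
  then have "-1/y \<le> -1" by simp
  then have "nint (-1/y) < 0" by (rule nint_neg)
  then show ?thesis using True by (simp add: sgnq_def)
next
  case False
  then have "y < 0" using assms by simp
  have "-y \<le> 1/2" "-y > 0" using assms \<open>y < 0\<close> by auto
  then have "2 \<le> 1/(-y)" by (subst pos_le_divide_eq) auto
  moreover have "1/(-y) = -1/y" by simp
  ultimately have "-1/y \<ge> 1" by simp
  then have "nint (-1/y) > 0" by (rule nint_pos)
  then show ?thesis using \<open>y < 0\<close> by (simp add: sgnq_def)
qed

lemma inv_abs_eq:
  assumes "j \<ge> 1" "mcf_x x j \<noteq> 0"
  shows "1 / \<bar>mcf_x x j\<bar> = \<bar>of_int (nint (-1/mcf_x x j)) + mcf_x x (Suc j)\<bar>"
  using mcf_rec[OF assms(1), of x] assms by (simp add: abs_divide)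

lemma b_bounds:
  assumes "\<bar>x\<bar> \<le> 1/2" "j \<ge> 1" "mcf_x x j \<noteq> 0"
  shows "of_int (mcf_b x j) - 1/2 \<le> 1 / \<bar>mcf_x x j\<bar>"
        "1 / \<bar>mcf_x x j\<bar> \<le> of_int (mcf_b x j) + 1/2"
        "mcf_b x j \<ge> 2"
proof -
  have h: "\<bar>mcf_x x (Suc j)\<bar> \<le> 1/2" using mcf_x_half[OF assms(1)] assms by simp
  have hj: "\<bar>mcf_x x j\<bar> \<le> 1/2" using mcf_x_half[OF assms(1) assms(2)] .
  have e: "1 / \<bar>mcf_x x j\<bar> = \<bar>of_int (nint (-1/mcf_x x j)) + mcf_x x (Suc j)\<bar>"
    by (rule inv_abs_eq[OF assms(2,3)])
  have b: "(of_int (mcf_b x j)::rat) = \<bar>of_int (nint (-1/mcf_x x j))\<bar>" by (simp add: mcf_b_def)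
  show l: "of_int (mcf_b x j) - 1/2 \<le> 1 / \<bar>mcf_x x j\<bar>" unfolding e b using h by linarith
  show u: "1 / \<bar>mcf_x x j\<bar> \<le> of_int (mcf_b x j) + 1/2" unfolding e b using h by linarith
  have "1 / \<bar>mcf_x x j\<bar> \<ge> 2" using hj assms(3) by (simp add: le_divide_eq)
  then have "(of_int (mcf_b x j)::rat) > 1" using u by linarith
  then show "mcf_b x j \<ge> 2" by simp
qed

lemma b_last:
  assumes "j \<ge> 1" "mcf_x x j \<noteq> 0" "mcf_x x (Suc j) = 0"
  shows "1 / \<bar>mcf_x x j\<bar> = of_int (mcf_b x j)"
  using inv_abs_eq[OF assms(1,2)] assms(3) by (simp add: mcf_b_def)

lemma cf_main:
  assumes x: "x \<noteq> 0" "\<bar>x\<bar> \<le> 1/2"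
  shows "mcf_conv x (mcf_len x) = x"
proof -
  define m where "m = mcf_len x"
  note mp = mcf_len_props[OF x, folded m_def]
  define f where "f j = (mcf_b x j, mcf_eps x j)" for j
  have P: "cf_val (map f [j..<m+1]) = of_int (mcf_eps x j) * \<bar>mcf_x x j\<bar>" if "1 \<le> j" "j \<le> m + 1" for j
    using that(2,1)
  proof (induction j rule: inc_induct)
    case base
    then show ?case using mp(2) by simp
  next
    case (step n)
    have n1: "1 \<le> n" using step by simp
    have nm: "n \<le> m" using step by simp
    have nz: "mcf_x x n \<noteq> 0" using mp(3) n1 nm by simp
    have hn: "\<bar>mcf_x x n\<bar> \<le> 1/2" using mcf_x_half[OF x(2) n1] .
    have IH: "cf_val (map f [Suc n..<m+1]) = of_int (mcf_eps x (Suc n)) * \<bar>mcf_x x (Suc n)\<bar>"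
      using step by simp
    define s where "s = sgnq (mcf_x x n)"
    define s' where "s' = sgnq (mcf_x x (Suc n))"
    define y where "y = mcf_x x (Suc n)"
    define N where "N = nint (-1/mcf_x x n)"
    have eps: "mcf_eps x (Suc n) = - s * s'" using n1 by (simp add: mcf_eps_def s_def s'_def)
    have s'y: "of_int s' * \<bar>y\<bar> = y" by (simp add: s'_def y_def sgnq_def)
    have ss: "s * s = 1" using nz by (simp add: s_def sgnq_def)
    have sx: "of_int s * mcf_x x n = \<bar>mcf_x x n\<bar>" using nz by (simp add: s_def sgnq_def)
    have Ns: "N = - s * mcf_b x n" using nint_sign[OF nz hn] by (simp add: N_def s_def mcf_b_def)
    have rec: "y = -1/mcf_x x n - of_int N" using mcf_rec[OF n1] by (simp add: y_def N_def)
    define sr where "sr = (of_int s :: rat)"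
    have srsr: "sr * sr = 1" using ss unfolding sr_def by (metis of_int_1 of_int_mult)
    have e1: "of_int (mcf_eps x (Suc n)) * \<bar>y\<bar> = - sr * y"
    proof -
      have "of_int (mcf_eps x (Suc n)) * \<bar>y\<bar> = - sr * (of_int s' * \<bar>y\<bar>)"
        unfolding eps sr_def by simp
      then show ?thesis using s'y by simp
    qed
    have e2: "sr * y = - sr / mcf_x x n + of_int (mcf_b x n)"
    proof -
      have "of_int N = - sr * of_int (mcf_b x n)" unfolding Ns sr_def by simp
      then have "y = -1/mcf_x x n + sr * of_int (mcf_b x n)" using rec by simp
      then have "sr * y = sr * (-1/mcf_x x n + sr * of_int (mcf_b x n))" by simp
      also have "\<dots> = - sr / mcf_x x n + (sr * sr) * of_int (mcf_b x n)"
        by (simp add: ring_distribs mult.assoc)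
      finally have "sr * y = - sr / mcf_x x n + (sr * sr) * of_int (mcf_b x n)" .
      then show ?thesis using srsr by simp
    qed
    have e3: "sr / mcf_x x n = 1 / \<bar>mcf_x x n\<bar>"
    proof -
      have "\<bar>mcf_x x n\<bar> = sr * mcf_x x n" using sx unfolding sr_def by simp
      then have "1 / \<bar>mcf_x x n\<bar> = (sr * sr) / (sr * mcf_x x n)" using srsr by simp
      also have "\<dots> = sr / mcf_x x n"
      proof -
        have "sr \<noteq> 0" using srsr by auto
        then show ?thesis using nz by (simp add: divide_simps)
      qed
      finally show ?thesis by simp
    qed
    have den: "of_int (mcf_b x n) + of_int (mcf_eps x (Suc n)) * \<bar>y\<bar> = 1 / \<bar>mcf_x x n\<bar>"
      using e1 e2 e3 by simp
    have "[n..<m+1] = n # [Suc n..<m+1]" using nm by (simp add: upt_conv_Cons)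
    then have "cf_val (map f [n..<m+1]) = of_int (mcf_eps x n) / (of_int (mcf_b x n) + of_int (mcf_eps x (Suc n)) * \<bar>y\<bar>)"
      using IH by (simp add: f_def y_def)
    also have "\<dots> = of_int (mcf_eps x n) * \<bar>mcf_x x n\<bar>" unfolding den by simp
    finally show ?case .
  qed
  have f_eq: "f = (\<lambda>j. (mcf_b x j, mcf_eps x j))" by (simp add: f_def fun_eq_iff)
  have "mcf_conv x m = cf_val (map f [1..<m+1])" unfolding mcf_conv_def f_eq ..
  also have "\<dots> = of_int (mcf_eps x 1) * \<bar>mcf_x x 1\<bar>" using P[of 1] by simp
  also have "\<dots> = x" using x(1) by (simp add: mcf_eps_def sgnq_def)
  finally show ?thesis unfolding m_def .
qed




definition inD :: "real \<Rightarrow> real \<Rightarrow> complex \<Rightarrow> bool" where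
  "inD a h z \<longleftrightarrow> cmod (z - (complex_of_real a - \<i> * complex_of_real (h/2))) \<le> h/2"

lemma inD_iff:
  assumes "h \<ge> 0"
  shows "inD a h z \<longleftrightarrow> (cmod (z - complex_of_real a))\<^sup>2 \<le> - h * Im z"
proof -
  have "inD a h z \<longleftrightarrow> (cmod (z - (complex_of_real a - \<i> * complex_of_real (h/2))))\<^sup>2 \<le> (h/2)\<^sup>2"
    unfolding inD_def using assms by (simp add: abs_le_square_iff[symmetric] del: abs_le_square_iff)
  also have "\<dots> \<longleftrightarrow> (Re z - a)\<^sup>2 + (Im z + h/2)\<^sup>2 \<le> (h/2)\<^sup>2"
    by (simp add: cmod_power2)
  also have "\<dots> \<longleftrightarrow> (Re z - a)\<^sup>2 + (Im z)\<^sup>2 \<le> - h * Im z"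
  proof -
    have eq: "(Re z - a)\<^sup>2 + (Im z + h/2)\<^sup>2 - (h/2)\<^sup>2 = (Re z - a)\<^sup>2 + (Im z)\<^sup>2 + h * Im z"
      by (simp add: power2_eq_square algebra_simps)
    show ?thesis using eq by (intro iffI) linarith+
  qed
  also have "\<dots> \<longleftrightarrow> (cmod (z - complex_of_real a))\<^sup>2 \<le> - h * Im z"
    by (simp add: cmod_power2)
  finally show ?thesis .
qed

lemma inD_h_nonneg: assumes "inD a h z" shows "h \<ge> 0"
proof -
  have "0 \<le> h/2" using order_trans[OF norm_ge_zero assms[unfolded inD_def]] .
  then show ?thesis by simp
qed

lemma inD_ball:
  assumes "inD a h z"
  shows "cmod (z - complex_of_real a) \<le> h"
proof -
  define c where "c = complex_of_real a - \<i> * complex_of_real (h/2)"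
  have eq: "z - complex_of_real a = (z - c) + (- (\<i> * complex_of_real (h/2)))" by (simp add: c_def)
  have "cmod (z - complex_of_real a) \<le> cmod (z - c) + cmod (- (\<i> * complex_of_real (h/2)))"
    unfolding eq by (rule norm_triangle_ineq)
  then have "cmod (z - complex_of_real a) \<le> cmod (z - (complex_of_real a - \<i> * complex_of_real (h/2))) + cmod (\<i> * complex_of_real (h/2))"
    by (simp add: c_def)
  also have "\<dots> \<le> h/2 + \<bar>h/2\<bar>" using assms by (simp add: inD_def norm_mult)
  finally have *: "cmod (z - complex_of_real a) \<le> h/2 + \<bar>h/2\<bar>" .
  have "h/2 \<ge> 0" using inD_h_nonneg[OF assms] by simp
  then show ?thesis using * by simp
qed

lemma inD_shift:
  assumes "inD a h z"
  shows "inD (a - t) h (z - complex_of_real t)"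
  using assms unfolding inD_def by (simp add: algebra_simps)

lemma inD_inv:
  assumes "a \<noteq> 0" "inD a h z"
  shows "inD (-1/a) (h/a\<^sup>2) (-1/z)"
proof -
  have h: "h \<ge> 0" using inD_h_nonneg[OF assms(2)] .
  have h': "h/a\<^sup>2 \<ge> 0" using h by simp
  have Q: "(cmod (z - complex_of_real a))\<^sup>2 \<le> - h * Im z" using assms(2) inD_iff[OF h] by simp
  have z: "z \<noteq> 0"
  proof
    assume "z = 0"
    then have "a\<^sup>2 \<le> 0" using Q by simp
    then show False using assms(1) by simp
  qed
  have e1: "-1/z - complex_of_real (-1/a) = (z - complex_of_real a) / (complex_of_real a * z)"
    using z assms(1) by (simp add: field_simps)
  have "(cmod (-1/z - complex_of_real (-1/a)))\<^sup>2 = (cmod (z - complex_of_real a))\<^sup>2 / (a\<^sup>2 * (cmod z)\<^sup>2)"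
    unfolding e1 by (simp add: norm_divide norm_mult power_divide power_mult_distrib)
  also have "\<dots> \<le> (- h * Im z) / (a\<^sup>2 * (cmod z)\<^sup>2)"
    using divide_right_mono[OF Q, of "a\<^sup>2 * (cmod z)\<^sup>2"] by simp
  also have "\<dots> = - (h/a\<^sup>2) * Im (-1/z)"
  proof -
    have "Im (-1/z) = Im z / (cmod z)\<^sup>2" by (simp add: Im_divide cmod_power2)
    then show ?thesis by simp
  qed
  finally show ?thesis using inD_iff[OF h'] by simp
qed

lemma nint_real_unique:
  fixes t :: real and M :: int
  assumes "\<bar>t - of_int M\<bar> < 1/2"
  shows "nint t = M"
proof -
  have "t - of_int M < 1/2" "-(t - of_int M) < 1/2" using assms unfolding abs_less_iff by auto
  then show ?thesis by (intro nint_unique) linarith+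
qed

lemma G_step:
  assumes "a \<noteq> 0" "inD a h z" "-1/a = of_int M + y" "\<bar>y\<bar> + h/a\<^sup>2 < 1/2"
  shows "G z = -1/z - of_int M" "inD y (h/a\<^sup>2) (G z)"
proof -
  have w: "inD (-1/a) (h/a\<^sup>2) (-1/z)" by (rule inD_inv[OF assms(1,2)])
  have "cmod (-1/z - complex_of_real (-1/a)) \<le> h/a\<^sup>2" by (rule inD_ball[OF w])
  then have "\<bar>Re (-1/z) - (-1/a)\<bar> \<le> h/a\<^sup>2"
    by (metis abs_Re_le_cmod minus_complex.simps(1) Re_complex_of_real order_trans)
  then have "\<bar>Re (-1/z) - of_int M\<bar> < 1/2" using assms(3,4) by linarith
  then have n: "nint (Re (-1/z)) = M" by (rule nint_real_unique)
  show g: "G z = -1/z - of_int M" unfolding G_def n ..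
  have "inD (-1/a - of_int M) (h/a\<^sup>2) (-1/z - complex_of_real (of_int M))"
    by (rule inD_shift[OF w])
  moreover have "-1/a - of_int M = y" using assms(3) by simp
  ultimately show "inD y (h/a\<^sup>2) (G z)" unfolding g by simp
qed

lemma arg_pos:
  assumes "Re w > 0" "\<bar>Im w\<bar> \<le> Re w"
  shows "has_arg_in w (-pi/4) (pi/4)"
proof -
  define u where "u = Re w"
  define v where "v = Im w"
  define t where "t = arctan (v/u)"
  have u: "u > 0" using assms by (simp add: u_def)
  have "\<bar>v\<bar> / \<bar>u\<bar> \<le> 1" using assms u by (simp add: u_def v_def divide_le_eq)
  then have "\<bar>v/u\<bar> \<le> 1" by (simp add: abs_divide)
  then have "v/u \<le> 1 \<and> -(v/u) \<le> 1" by (simp only: abs_le_iff)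
  then have "-1 \<le> v/u" "v/u \<le> 1" by linarith+
  then have t1: "-pi/4 \<le> t" "t \<le> pi/4"
    using arctan_le_iff[of "-1" "v/u"] arctan_le_iff[of "v/u" 1] by (simp_all add: t_def arctan_minus arctan_one)
  have s: "sqrt (1 + (v/u)\<^sup>2) * u = cmod w"
  proof -
    have "cmod w = sqrt (u\<^sup>2 + v\<^sup>2)" by (simp add: cmod_def u_def v_def)
    also have "u\<^sup>2 + v\<^sup>2 = u\<^sup>2 * (1 + (v/u)\<^sup>2)" using u by (simp add: field_simps power2_eq_square)
    finally show ?thesis using u by (simp add: real_sqrt_mult)
  qed
  have pos: "sqrt (1 + (v/u)\<^sup>2) > 0" by (simp add: add_pos_nonneg)
  have "complex_of_real (cmod w) * cis t = w"
  proof (rule complex_eqI)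
    show "Re (complex_of_real (cmod w) * cis t) = Re w"
      using pos by (simp add: t_def cos_arctan s[symmetric] u_def)
    show "Im (complex_of_real (cmod w) * cis t) = Im w"
      using pos u by (simp add: t_def sin_arctan s[symmetric] v_def u_def)
  qed
  then show ?thesis unfolding has_arg_in_def using t1 by auto
qed

lemma arg_neg:
  assumes "Re w < 0" "\<bar>Im w\<bar> \<le> - Re w"
  shows "has_arg_in w (3*pi/4) (5*pi/4)"
proof -
  have "has_arg_in (-w) (-pi/4) (pi/4)" using assms by (intro arg_pos) auto
  then obtain t where t: "-pi/4 \<le> t" "t \<le> pi/4" "-w = complex_of_real (cmod w) * cis t"
    unfolding has_arg_in_def by auto
  have "w = complex_of_real (cmod w) * cis (t + pi)"
    using t(3) by (simp add: cis_def complex_eq_iff cos_add sin_add)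
  moreover have "3*pi/4 \<le> t + pi" "t + pi \<le> 5*pi/4" using t by simp_all
  ultimately show ?thesis unfolding has_arg_in_def by blast
qed




lemma P_bound:
  fixes B :: "nat \<Rightarrow> real"
  assumes "B 1 \<ge> 2" "\<forall>j. 1 \<le> j \<and> j \<le> n \<longrightarrow> B (j+1) \<ge> (B j)\<^sup>2"
  shows "B 1 * (\<Prod>j\<in>{1..n}. B j + 1/2) \<le> 2 * B (n+1) - 2 \<and> B (n+1) \<ge> B 1"
  using assms(2)
proof (induction n)
  case 0 then show ?case using assms(1) by simp
next
  case (Suc n)
  then have IH: "B 1 * (\<Prod>j\<in>{1..n}. B j + 1/2) \<le> 2 * B (n+1) - 2" "B (n+1) \<ge> B 1" by auto
  have sq: "B (n+2) \<ge> (B (n+1))\<^sup>2" using Suc.prems by (metis Suc_eq_plus1 add_2_eq_Suc' le_add2 order_refl)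
  have b2: "B (n+1) \<ge> 2" using IH(2) assms(1) by linarith
  have "B 1 * (\<Prod>j\<in>{1..Suc n}. B j + 1/2) = (B 1 * (\<Prod>j\<in>{1..n}. B j + 1/2)) * (B (n+1) + 1/2)"
    by (simp add: prod.cl_ivl_Suc mult.assoc)
  also have "\<dots> \<le> (2 * B (n+1) - 2) * (B (n+1) + 1/2)"
    using IH(1) b2 by (intro mult_right_mono) auto
  also have "\<dots> = 2 * (B (n+1))\<^sup>2 - B (n+1) - 1" by (simp add: power2_eq_square algebra_simps)
  also have "\<dots> \<le> 2 * B (Suc n + 1) - 2" using sq b2 by simp
  finally have P: "B 1 * (\<Prod>j\<in>{1..Suc n}. B j + 1/2) \<le> 2 * B (Suc n + 1) - 2" .
  have "(B (n+1))\<^sup>2 \<ge> B (n+1)" using b2 by (simp add: power2_eq_square)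
  then have "B (Suc n + 1) \<ge> B 1" using sq IH(2) by simp
  with P show ?case by simp
qed

lemma core_facts:
  fixes x :: rat
  assumes x: "x \<noteq> 0" "\<bar>x\<bar> \<le> 1/2"
  defines "m \<equiv> mcf_len x"
  defines "X \<equiv> \<lambda>j. real_of_rat (mcf_x x j)"
  defines "B \<equiv> \<lambda>j. real_of_int (mcf_b x j)"
  defines "D \<equiv> \<lambda>j. real_of_int (snd (quotient_of (mcf_x x j)))"
  shows "m \<ge> 1" "X (m+1) = 0"
    "\<And>j. 1 \<le> j \<Longrightarrow> j \<le> m \<Longrightarrow> X j \<noteq> 0"
    "\<And>j. 1 \<le> j \<Longrightarrow> \<bar>X j\<bar> \<le> 1/2"
    "\<And>j. 1 \<le> j \<Longrightarrow> j \<le> m \<Longrightarrow> B j - 1/2 \<le> 1 / \<bar>X j\<bar>"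
    "\<And>j. 1 \<le> j \<Longrightarrow> j \<le> m \<Longrightarrow> 1 / \<bar>X j\<bar> \<le> B j + 1/2"
    "\<And>j. 1 \<le> j \<Longrightarrow> j \<le> m \<Longrightarrow> B j \<ge> 2"
    "\<And>j. 1 \<le> j \<Longrightarrow> j \<le> m \<Longrightarrow> D (Suc j) = \<bar>X j\<bar> * D j"
    "\<And>j. 1 \<le> j \<Longrightarrow> j \<le> m \<Longrightarrow> 1 / \<bar>X j\<bar> \<le> D j"
    "D 1 = real_of_int (snd (quotient_of x))"
    "\<And>j. 1 \<le> j \<Longrightarrow> -1 / X j = real_of_int (nint (-1 / mcf_x x j)) + X (Suc j)"
    "mcf_den x m = snd (quotient_of x)"
proof -
  note mp = mcf_len_props[OF x, folded m_def]
  show "m \<ge> 1" by (rule mp(1))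
  show "X (m+1) = 0" using mp(2) by (simp add: X_def)
  show nz: "\<And>j. 1 \<le> j \<Longrightarrow> j \<le> m \<Longrightarrow> X j \<noteq> 0" using mp(3) by (simp add: X_def)
  show "\<And>j. 1 \<le> j \<Longrightarrow> \<bar>X j\<bar> \<le> 1/2"
  proof -
    fix j :: nat assume "1 \<le> j"
    then have "\<bar>mcf_x x j\<bar> \<le> 1/2" by (rule mcf_x_half[OF x(2)])
    then have "real_of_rat \<bar>mcf_x x j\<bar> \<le> real_of_rat (1/2)" by (simp only: of_rat_less_eq)
    then show "\<bar>X j\<bar> \<le> 1/2" by (simp add: X_def of_rat_divide)
  qed
  fix j :: nat
  assume j: "1 \<le> j" "j \<le> m"
  have nzr: "mcf_x x j \<noteq> 0" using mp(3) j by simp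
  note bb = b_bounds[OF x(2) j(1) nzr]
  have cast: "1 / \<bar>X j\<bar> = real_of_rat (1 / \<bar>mcf_x x j\<bar>)" by (simp add: X_def of_rat_divide)
  show "B j - 1/2 \<le> 1 / \<bar>X j\<bar>"
  proof -
    have "real_of_rat (of_int (mcf_b x j) - 1/2) \<le> real_of_rat (1 / \<bar>mcf_x x j\<bar>)"
      using bb(1) by (simp only: of_rat_less_eq)
    then show ?thesis unfolding cast by (simp add: B_def of_rat_diff of_rat_divide)
  qed
  show "1 / \<bar>X j\<bar> \<le> B j + 1/2"
  proof -
    have "real_of_rat (1 / \<bar>mcf_x x j\<bar>) \<le> real_of_rat (of_int (mcf_b x j) + 1/2)"
      using bb(2) by (simp only: of_rat_less_eq)
    then show ?thesis unfolding cast by (simp add: B_def of_rat_add of_rat_divide)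
  qed
  show "B j \<ge> 2" using bb(3) by (simp add: B_def)
  show "D (Suc j) = \<bar>X j\<bar> * D j"
  proof -
    have "of_int (snd (quotient_of (Tq (mcf_x x j)))) = \<bar>mcf_x x j\<bar> * of_int (snd (quotient_of (mcf_x x j)))"
      by (rule den_step[OF nzr])
    then have "real_of_rat (of_int (snd (quotient_of (Tq (mcf_x x j))))) = real_of_rat (\<bar>mcf_x x j\<bar> * of_int (snd (quotient_of (mcf_x x j))))"
      by simp
    then show ?thesis using mcf_x_Suc[OF j(1), of x] by (simp add: D_def X_def of_rat_mult)
  qed
  show "1 / \<bar>X j\<bar> \<le> D j"
  proof -
    have "real_of_rat (1 / \<bar>mcf_x x j\<bar>) \<le> real_of_rat (of_int (snd (quotient_of (mcf_x x j))))"
      using den_ge_inv[OF nzr] by (simp only: of_rat_less_eq)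
    then show ?thesis unfolding cast by (simp add: D_def)
  qed
next
  show "D 1 = real_of_int (snd (quotient_of x))" by (simp add: D_def)
next
  fix j :: nat assume j: "1 \<le> j"
  show "-1 / X j = real_of_int (nint (-1 / mcf_x x j)) + X (Suc j)"
  proof -
    have "mcf_x x (Suc j) = -1/mcf_x x j - of_int (nint (-1/mcf_x x j))" by (rule mcf_rec[OF j])
    then have "real_of_rat (mcf_x x (Suc j)) = real_of_rat (-1/mcf_x x j - of_int (nint (-1/mcf_x x j)))" by simp
    then show ?thesis by (simp add: X_def of_rat_diff of_rat_divide of_rat_minus)
  qed
next
  show "mcf_den x m = snd (quotient_of x)" unfolding mcf_den_def m_def cf_main[OF x] ..
qed

lemma core:
  fixes x :: rat and z :: complex and K c r :: real and N :: nat
  assumes x: "x \<noteq> 0" "\<bar>x\<bar> \<le> 1/2"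
    and bsq: "\<forall>j. 1 \<le> j \<and> j \<le> mcf_len x - 1 \<longrightarrow> mcf_b x (j+1) \<ge> (mcf_b x j)\<^sup>2"
    and K: "K \<ge> 1" "K * real N \<le> real_of_int (mcf_b x 1)"
    and N: "N \<ge> 2"
    and c: "0 < c" "c \<le> 1/6"
    and r: "3 / real N \<le> r" "r < 1/2"
    and zD: "inD (real_of_rat x) (2*c*K / real_of_int (snd (quotient_of x))) z"
  shows "(\<forall>n. n + 2 \<le> mcf_len x \<longrightarrow> cmod ((G^^n) z) \<le> r \<and>
            (Re ((G^^n) z) > 0 \<longrightarrow> has_arg_in ((G^^n) z) (-pi/4) (pi/4)) \<and>
            (Re ((G^^n) z) < 0 \<longrightarrow> has_arg_in ((G^^n) z) (3*pi/4) (5*pi/4))) \<and>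
         cmod ((G^^(mcf_len x - 1)) z) \<le> r"
proof -
  define m where "m = mcf_len x"
  define X where "X j = real_of_rat (mcf_x x j)" for j
  define B where "B j = real_of_int (mcf_b x j)" for j
  define D where "D j = real_of_int (snd (quotient_of (mcf_x x j)))" for j
  note cf = core_facts[OF x, folded m_def X_def B_def D_def]
  have B_int: "B j = real_of_int (mcf_b x j)" for j by (simp add: B_def)
  define q where "q = D 1"
  have q_eq: "real_of_int (snd (quotient_of x)) = q" using cf(10) by (simp add: q_def)
  have qpos: "q > 0" unfolding q_def D_def by (simp add: quotient_of_denom_pos')
  define Pi where "Pi n = (\<Prod>j\<in>{1..n}. \<bar>X j\<bar>)" for n
  define Q where "Q n = (\<Prod>j\<in>{1..n}. B j + 1/2)" for n
  define hn where "hn n = 2*c*K / (q * (\<Prod>j\<in>{1..n}. X j)\<^sup>2)" for n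
  have Npos: "real N \<ge> 2" using N by simp
  have "real N \<le> K * real N" using K(1) by (simp add: mult_le_cancel_right1)
  then have B1: "B 1 \<ge> real N" using K(2) unfolding B_def by linarith
  have bsq': "\<forall>j. 1 \<le> j \<and> j \<le> m - 1 \<longrightarrow> B (j+1) \<ge> (B j)\<^sup>2"
  proof (intro allI impI)
    fix j assume "1 \<le> j \<and> j \<le> m - 1"
    then have "mcf_b x (j+1) \<ge> (mcf_b x j)\<^sup>2" using bsq by (simp add: m_def)
    then have "real_of_int (mcf_b x (j+1)) \<ge> real_of_int ((mcf_b x j)\<^sup>2)" by (simp only: of_int_le_iff)
    then show "B (j+1) \<ge> (B j)\<^sup>2" by (simp add: B_def)
  qed
  have Pipos: "Pi n > 0" if "n \<le> m" for n
    unfolding Pi_def using cf(3) that by (intro prod_pos) auto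
  have prodD: "q * Pi n = D (n+1)" if "n + 1 \<le> m" for n
    using that
  proof (induction n)
    case 0 then show ?case by (simp add: q_def Pi_def)
  next
    case (Suc n)
    have "q * Pi (Suc n) = (q * Pi n) * \<bar>X (n+1)\<bar>" by (simp add: Pi_def prod.cl_ivl_Suc mult.assoc)
    also have "\<dots> = D (n+1) * \<bar>X (n+1)\<bar>" using Suc by simp
    also have "\<dots> = D (Suc n + 1)" using cf(8)[of "n+1"] Suc.prems by simp
    finally show ?case .
  qed
  have hn_eq: "hn n = 2*c*K / (D (n+1) * Pi n)" if "n + 1 \<le> m" for n
  proof -
    have "(\<Prod>j\<in>{1..n}. X j)\<^sup>2 = (Pi n)\<^sup>2" by (simp add: Pi_def abs_prod[symmetric])
    then have "q * (\<Prod>j\<in>{1..n}. X j)\<^sup>2 = (q * Pi n) * Pi n" by (simp add: power2_eq_square)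
    then show ?thesis unfolding hn_def using prodD[OF that] by simp
  qed
  have invPi: "1 / Pi n \<le> Q n" if "n \<le> m" for n
  proof -
    have "1 / Pi n = (\<Prod>j\<in>{1..n}. 1 / \<bar>X j\<bar>)" by (simp add: Pi_def prod_dividef)
    also have "\<dots> \<le> Q n" unfolding Q_def using that cf(6)
      by (intro prod_mono) auto
    finally show ?thesis .
  qed
  have Pb: "B 1 * Q n \<le> 2 * B (n+1) - 2 \<and> B (n+1) \<ge> B 1" if "n + 1 \<le> m" for n
    unfolding Q_def
  proof (rule P_bound)
    show "B 1 \<ge> 2" using B1 Npos by simp
    show "\<forall>j. 1 \<le> j \<and> j \<le> n \<longrightarrow> (B j)\<^sup>2 \<le> B (j + 1)" using bsq' that by auto
  qed
  have Qnn: "Q n \<ge> 0" if "n \<le> m" for n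
    unfolding Q_def
  proof (rule prod_nonneg)
    fix j assume "j \<in> {1..n}"
    then have "B j \<ge> 2" using cf(7)[of j] that by auto
    then show "0 \<le> B j + 1/2" by simp
  qed
  have Kb: "K \<le> B 1 / real N" using K(2) Npos by (simp add: B_def field_simps)
  have cK: "2*c*K \<le> (2*c / real N) * B 1" using mult_left_mono[OF Kb, of "2*c"] c by (simp add: mult_ac)
  have hn_le: "hn n \<le> (2*c / real N) * (B 1 * Q n) * (1 / D (n+1))" if "n + 1 \<le> m" for n
  proof -
    have Dp: "D (n+1) > 0" unfolding D_def by (simp add: quotient_of_denom_pos')
    have "hn n = 2*c*K * (1 / D (n+1)) * (1 / Pi n)" using hn_eq[OF that] by simp
    also have "\<dots> \<le> 2*c*K * (1 / D (n+1)) * Q n"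
      using invPi[of n] that c K Dp by (intro mult_left_mono) auto
    also have "\<dots> \<le> (2*c / real N) * B 1 * (1 / D (n+1)) * Q n"
      using cK Dp Qnn[of n] that by (intro mult_right_mono) auto
    finally show ?thesis by (simp add: mult_ac)
  qed
  have Cb: "\<bar>X (n+1)\<bar> + hn n \<le> 3 / real N" if "n + 1 \<le> m" for n
  proof -
    define a where "a = \<bar>X (n+1)\<bar>"
    have a: "a > 0" using cf(3)[of "n+1"] that by (simp add: a_def)
    have aB: "B (n+1) - 1/2 \<le> 1 / a" using cf(5)[of "n+1"] that by (simp add: a_def)
    then have aB': "a * (B (n+1) - 1/2) \<le> 1" using a by (simp add: field_simps)
    have Dinv: "1 / D (n+1) \<le> a"
    proof -
      have Dp: "D (n+1) > 0" unfolding D_def by (simp add: quotient_of_denom_pos')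
      have "1 / a \<le> D (n+1)" using cf(9)[of "n+1"] that by (simp add: a_def)
      then have "1 \<le> D (n+1) * a" using a by (simp add: divide_le_eq)
      then show ?thesis using Dp by (simp add: divide_le_eq mult.commute)
    qed
    have PB: "B 1 * Q n \<le> 2 * B (n+1) - 2" "B (n+1) \<ge> B 1" using Pb[OF that] by auto
    have BQ0: "B 1 * Q n \<ge> 0" using B1 Npos Qnn[of n] that by simp
    have "(2*c / real N) * (B 1 * Q n) * (1 / D (n+1)) \<le> (2*c / real N) * (B 1 * Q n) * a"
      by (rule mult_left_mono[OF Dinv]) (use BQ0 c Npos in simp)
    then have "hn n \<le> (2*c / real N) * (B 1 * Q n) * a" using hn_le[OF that] by linarith
    also have "\<dots> \<le> (2*c / real N) * ((2 * B (n+1) - 2) * a)"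
    proof -
      have "(B 1 * Q n) * a \<le> (2 * B (n+1) - 2) * a" by (rule mult_right_mono) (use PB a in auto)
      then have "(2*c / real N) * ((B 1 * Q n) * a) \<le> (2*c / real N) * ((2 * B (n+1) - 2) * a)"
        by (rule mult_left_mono) (use c Npos in simp)
      then show ?thesis by (simp only: mult.assoc)
    qed
    also have "\<dots> \<le> (2*c / real N) * 2"
    proof -
      have "(2 * B (n+1) - 2) * a \<le> 2 * (a * (B (n+1) - 1/2))" using a by (simp add: algebra_simps)
      also have "\<dots> \<le> 2" using aB' by simp
      finally show ?thesis using c Npos by (intro mult_left_mono) auto
    qed
    finally have h1: "hn n \<le> 4*c / real N" by simp
    have "B (n+1) \<ge> real N" using PB(2) B1 by simp
    then have "a * (real N - 1/2) \<le> a * (B (n+1) - 1/2)" using a by (intro mult_left_mono) auto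
    then have "a * (real N - 1/2) \<le> 1" using aB' by linarith
    then have e: "a * real N - a/2 \<le> 1" by (simp add: algebra_simps)
    have "a \<le> 1/2" using cf(4)[of "n+1"] by (simp add: a_def)
    then have "a * real N \<le> 2" using e by linarith
    then have A2: "a \<le> 2 / real N" using Npos by (simp add: le_divide_eq)
    have c4: "4*c / real N \<le> 1 / real N" using c Npos by (simp add: divide_right_mono)
    have "2 / real N + 1 / real N = 3 / real N" by (simp add: add_divide_distrib[symmetric])
    then show ?thesis using h1 A2 c4 unfolding a_def by linarith
  qed
  have Db: "2 * hn n \<le> \<bar>X (n+1)\<bar>" if "n + 2 \<le> m" for n
  proof -
    have n1: "n + 1 \<le> m" using that by simp
    define a where "a = \<bar>X (n+1)\<bar>"
    define a' where "a' = \<bar>X (n+2)\<bar>"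
    have a: "a > 0" using cf(3)[of "n+1"] n1 by (simp add: a_def)
    have a': "a' > 0" using cf(3)[of "n+2"] that by (simp add: a'_def)
    have aB2: "B (n+2) - 1/2 \<le> 1 / a'" using cf(5)[of "n+2"] that by (simp add: a'_def)
    then have aB2': "a' * (B (n+2) - 1/2) \<le> 1" using a' by (simp add: field_simps)
    have Dsuc: "D (n+2) = a * D (n+1)" using cf(8)[of "n+1"] n1 by (simp add: a_def)
    have D2: "1 / a' \<le> D (n+2)" using cf(9)[of "n+2"] that by (simp add: a'_def)
    have Dp: "D (n+1) > 0" unfolding D_def by (simp add: quotient_of_denom_pos')
    have Dinv: "1 / D (n+1) \<le> a * a'"
    proof -
      have "1 \<le> a' * D (n+2)" using D2 a' by (simp add: field_simps)
      then have "1 \<le> a' * a * D (n+1)" using Dsuc by (simp add: mult_ac)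
      then show ?thesis using Dp by (simp add: field_simps mult_ac)
    qed
    have PB: "B 1 * Q n \<le> 2 * B (n+1) - 2" "B (n+1) \<ge> B 1" using Pb[OF n1] by auto
    have BQ0: "B 1 * Q n \<ge> 0" using B1 Npos Qnn[of n] n1 by simp
    have Bn2: "B (n+1) \<ge> 2" using cf(7)[of "n+1"] n1 by simp
    have sq: "B (n+2) \<ge> (B (n+1))\<^sup>2" using bsq'[rule_format, of "n+1"] that by (simp add: numeral_2_eq_2)
    have "B (n+1) * B (n+1) \<ge> 2 * B (n+1)" using Bn2 by (intro mult_right_mono) auto
    then have "(B (n+1))\<^sup>2 - 1/2 \<ge> B (n+1)" using Bn2 unfolding power2_eq_square by linarith
    then have "B (n+2) - 1/2 \<ge> B (n+1)" using sq by simp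
    then have "a' * B (n+1) \<le> a' * (B (n+2) - 1/2)" using a' by (intro mult_left_mono) auto
    then have a'B: "a' * B (n+1) \<le> 1" using aB2' by linarith
    have "(2*c / real N) * (B 1 * Q n) * (1 / D (n+1)) \<le> (2*c / real N) * (B 1 * Q n) * (a * a')"
      by (rule mult_left_mono[OF Dinv]) (use BQ0 c Npos in simp)
    then have "hn n \<le> (2*c / real N) * (B 1 * Q n) * (a * a')" using hn_le[OF n1] by linarith
    also have "\<dots> \<le> (2*c / real N) * (2 * B (n+1) * (a * a'))"
    proof -
      have "B 1 * Q n \<le> 2 * B (n+1)" using PB by simp
      then have "(B 1 * Q n) * (a * a') \<le> (2 * B (n+1)) * (a * a')" using a a' by (intro mult_right_mono) auto
      then have "(2*c / real N) * ((B 1 * Q n) * (a * a')) \<le> (2*c / real N) * ((2 * B (n+1)) * (a * a'))"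
        by (rule mult_left_mono) (use c Npos in simp)
      then show ?thesis by (simp only: mult.assoc)
    qed
    also have "\<dots> = (2*c / real N) * 2 * a * (a' * B (n+1))" by (simp add: mult_ac)
    also have "\<dots> \<le> (2*c / real N) * 2 * a * 1"
      using a'B a c Npos by (intro mult_left_mono) auto
    finally have "hn n \<le> 4 * c / real N * a" by simp
    moreover have "4 * c / real N \<le> 1/3" using c Npos by (simp add: field_simps)
    ultimately have "hn n \<le> 1/3 * a" using a by (meson mult_right_mono less_imp_le order_trans)
    then show ?thesis by (simp add: a_def)
  qed
  have hn0: "hn 0 = 2*c*K / real_of_int (snd (quotient_of x))" by (simp add: hn_def q_eq)
  have hn_Suc: "hn (Suc n) = hn n / (X (n+1))\<^sup>2" for n
    by (simp add: hn_def prod.cl_ivl_Suc power_mult_distrib)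
  have iter: "inD (X (n+1)) (hn n) ((G^^n) z)" if "n + 1 \<le> m" for n
    using that
  proof (induction n)
    case 0 then show ?case using zD hn0 by (simp add: X_def)
  next
    case (Suc n)
    have n2: "n + 2 \<le> m" using Suc.prems by simp
    have IH: "inD (X (n+1)) (hn n) ((G^^n) z)" using Suc n2 by simp
    have a0: "X (n+1) \<noteq> 0" using cf(3)[of "n+1"] n2 by simp
    have rec: "-1 / X (n+1) = real_of_int (nint (-1 / mcf_x x (n+1))) + X (n+2)"
      using cf(11)[of "n+1"] by simp
    have c3: "\<bar>X (n+2)\<bar> + hn (Suc n) \<le> 3 / real N" using Cb[of "Suc n"] Suc.prems by (simp add: numeral_2_eq_2)
    have e: "hn n / (X (n+1))\<^sup>2 = hn (Suc n)" using hn_Suc[of n] by simp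
    have cond: "\<bar>X (n+2)\<bar> + hn n / (X (n+1))\<^sup>2 < 1/2" unfolding e using c3 r by linarith
    have "inD (X (n+2)) (hn n / (X (n+1))\<^sup>2) (G ((G^^n) z))"
      by (rule G_step(2)[OF a0 IH rec cond])
    then show ?case using hn_Suc[of n] by (simp add: numeral_2_eq_2)
  qed
  have m1: "m \<ge> 1" by (rule cf(1))
  show ?thesis
  proof (intro conjI allI impI)
    fix n assume n2: "n + 2 \<le> mcf_len x"
    then have n2': "n + 2 \<le> m" by (simp add: m_def)
    then have n1: "n + 1 \<le> m" by simp
    define w where "w = (G^^n) z"
    define a where "a = X (n+1)"
    have wD: "inD a (hn n) w" using iter[OF n1] by (simp add: w_def a_def)
    have ball: "cmod (w - complex_of_real a) \<le> hn n" by (rule inD_ball[OF wD])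
    have C: "\<bar>a\<bar> + hn n \<le> r" using Cb[OF n1] r by (simp add: a_def)
    have Dd: "2 * hn n \<le> \<bar>a\<bar>" using Db[OF n2'] by (simp add: a_def)
    have "cmod w \<le> \<bar>a\<bar> + hn n"
      using ball norm_triangle_ineq2[of w "complex_of_real a"] by simp
    then show "cmod ((G^^n) z) \<le> r" using C by (simp add: w_def)
    have re: "\<bar>Re w - a\<bar> \<le> hn n" using ball abs_Re_le_cmod[of "w - complex_of_real a"] by simp
    have im: "\<bar>Im w\<bar> \<le> hn n" using ball abs_Im_le_cmod[of "w - complex_of_real a"] by simp
    show "0 < Re ((G^^n) z) \<Longrightarrow> has_arg_in ((G^^n) z) (-pi/4) (pi/4)"
    proof -
      assume "0 < Re ((G^^n) z)"
      then have "Re w > 0" by (simp add: w_def)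
      then have "\<bar>Im w\<bar> \<le> Re w" using re im Dd by linarith
      then show ?thesis using \<open>Re w > 0\<close> arg_pos unfolding w_def by blast
    qed
    show "Re ((G^^n) z) < 0 \<Longrightarrow> has_arg_in ((G^^n) z) (3*pi/4) (5*pi/4)"
    proof -
      assume "Re ((G^^n) z) < 0"
      then have "Re w < 0" by (simp add: w_def)
      then have "\<bar>Im w\<bar> \<le> - Re w" using re im Dd by linarith
      then show ?thesis using \<open>Re w < 0\<close> arg_neg unfolding w_def by blast
    qed
  next
    have n1: "(m - 1) + 1 \<le> m" using m1 by simp
    define w where "w = (G^^(m-1)) z"
    define a where "a = X (m - 1 + 1)"
    have wD: "inD a (hn (m-1)) w" using iter[OF n1] by (simp add: w_def a_def)
    have ball: "cmod (w - complex_of_real a) \<le> hn (m-1)" by (rule inD_ball[OF wD])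
    have C: "\<bar>a\<bar> + hn (m-1) \<le> r" using Cb[OF n1] r by (simp add: a_def)
    have "cmod w \<le> \<bar>a\<bar> + hn (m-1)"
      using ball norm_triangle_ineq2[of w "complex_of_real a"] by simp
    then show "cmod ((G^^(mcf_len x - 1)) z) \<le> r" using C by (simp add: w_def m_def)
  qed
qed

lemma q_ge_b:
  fixes x :: rat
  assumes x: "x \<noteq> 0" "\<bar>x\<bar> \<le> 1/2"
  shows "mcf_b x 1 \<le> snd (quotient_of x)"
proof -
  note cf = core_facts[OF x]
  have "real_of_int (mcf_b x 1) - 1/2 \<le> real_of_int (snd (quotient_of x))"
    using cf(5)[of 1] cf(9)[of 1] cf(1) cf(10) by fastforce
  then have "real_of_int (mcf_b x 1) < real_of_int (snd (quotient_of x) + 1)" by simp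
  then show ?thesis by (simp only: of_int_less_iff)
qed

theorem proposition6p7:
  fixes r :: real
  assumes "0 < r" and "r < 1/2"
  shows "\<exists>N::nat. N \<ge> 2 \<and>
    (\<forall>x :: nat \<Rightarrow> rat. QG N x \<longrightarrow>
      (\<forall>i\<ge>1. \<forall>z :: complex.
        let q = real_of_int (snd (quotient_of (x i)));
            k = (\<Prod>l\<in>{1..<i}. real_of_int (snd (quotient_of (x l))));
            m = mcf_len (x i)
        in cmod (z - (complex_of_real (real_of_rat (x i))
                      - \<i> * complex_of_real ((k / q) * (ln 2 / (2 * pi)))))
             \<le> (ln 2 / (2 * pi)) * (k / q) \<longrightarrow>
           (\<forall>n::nat. n + 2 \<le> m \<longrightarrow>
              cmod ((G ^^ n) z) \<le> r \<and>
              (Re ((G ^^ n) z) > 0 \<longrightarrow> has_arg_in ((G ^^ n) z) (-pi/4) (pi/4)) \<and>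
              (Re ((G ^^ n) z) < 0 \<longrightarrow> has_arg_in ((G ^^ n) z) (3*pi/4) (5*pi/4))) \<and>
           cmod ((G ^^ (m - 1)) z) \<le> r))"
proof -
  define N where "N = nat \<lceil>3 / r\<rceil> + 2"
  define c where "c = ln 2 / (2 * pi)"
  have N2: "N \<ge> 2" by (simp add: N_def)
  have "real N \<ge> 3 / r" unfolding N_def by linarith
  then have Nr: "3 / real N \<le> r" using assms(1) N2
    by (simp add: divide_le_eq mult.commute)
  have c0: "0 < c" unfolding c_def using pi_gt_zero by (simp add: ln_gt_zero)
  have c6: "c \<le> 1/6"
  proof -
    have "ln 2 \<le> (1::real)" using ln_2_less_1 by simp
    moreover have "2 * pi \<ge> 6" using pi_gt3 by simp
    ultimately have "ln 2 / (2 * pi) \<le> 1 / 6" using pi_gt_zero by (simp add: frac_le)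
    then show ?thesis by (simp add: c_def)
  qed
  show ?thesis
  proof (intro exI[of _ N] conjI allI impI N2)
    fix x :: "nat \<Rightarrow> rat" and i :: nat and z :: complex
    assume QG: "QG N x" and i: "1 \<le> i"
    note QGd = QG[unfolded QG_def]
    have xi: "x l \<noteq> 0" "\<bar>x l\<bar> \<le> 1/2" if "l \<ge> 1" for l
      using QGd that by (auto simp: abs_le_iff)
    define qq where "qq l = real_of_int (snd (quotient_of (x l)))" for l
    define K where "K j = (\<Prod>l\<in>{1..<j}. qq l)" for j
    have qq1: "qq l \<ge> 1" for l
    proof -
      have "snd (quotient_of (x l)) \<ge> 1" using quotient_of_denom_pos'[of "x l"] by linarith
      then show ?thesis by (simp add: qq_def)
    qed
    have qqb: "qq l \<ge> real_of_int (mcf_b (x l) 1)" if "l \<ge> 1" for l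
      using q_ge_b[OF xi[OF that]] by (simp add: qq_def)
    have stp: "real_of_int (mcf_b (x (l+1)) 1) \<ge> (qq l)\<^sup>2" if "l \<ge> 1" for l
    proof -
      have "mcf_b (x (l+1)) 1 \<ge> (mcf_den (x l) (mcf_len (x l)))\<^sup>2" using QGd that by auto
      moreover have "mcf_den (x l) (mcf_len (x l)) = snd (quotient_of (x l))"
        by (rule core_facts(12)[OF xi[OF that]])
      ultimately have "mcf_b (x (l+1)) 1 \<ge> (snd (quotient_of (x l)))\<^sup>2" by simp
      then have "real_of_int (mcf_b (x (l+1)) 1) \<ge> real_of_int ((snd (quotient_of (x l)))\<^sup>2)"
        by (simp only: of_int_le_iff)
      then show ?thesis by (simp add: qq_def)
    qed
    have Kge1: "K j \<ge> 1" for j unfolding K_def by (rule prod_ge_1) (use qq1 in auto)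
    have KSuc: "K (Suc j) = K j * qq j" if "j \<ge> 1" for j
      using that by (simp add: K_def)
    have inv: "K j * qq 1 \<le> qq j" if "j \<ge> 1" for j
      using that
    proof (induction j rule: dec_induct)
      case base then show ?case by (simp add: K_def)
    next
      case (step j)
      have "K (Suc j) * qq 1 = (K j * qq 1) * qq j" using KSuc[OF step(1)] by (simp add: mult_ac)
      also have "\<dots> \<le> qq j * qq j" using step(3) qq1[of j] by (intro mult_right_mono) auto
      also have "\<dots> \<le> real_of_int (mcf_b (x (j+1)) 1)" using stp[of j] step(1) by (simp add: power2_eq_square)
      also have "\<dots> \<le> qq (Suc j)" using qqb[of "Suc j"] by simp
      finally show ?case .
    qed
    show "let q = real_of_int (snd (quotient_of (x i)));
            k = (\<Prod>l\<in>{1..<i}. real_of_int (snd (quotient_of (x l))));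
            m = mcf_len (x i)
        in cmod (z - (complex_of_real (real_of_rat (x i))
                      - \<i> * complex_of_real ((k / q) * (ln 2 / (2 * pi)))))
             \<le> (ln 2 / (2 * pi)) * (k / q) \<longrightarrow>
           (\<forall>n::nat. n + 2 \<le> m \<longrightarrow>
              cmod ((G ^^ n) z) \<le> r \<and>
              (Re ((G ^^ n) z) > 0 \<longrightarrow> has_arg_in ((G ^^ n) z) (-pi/4) (pi/4)) \<and>
              (Re ((G ^^ n) z) < 0 \<longrightarrow> has_arg_in ((G ^^ n) z) (3*pi/4) (5*pi/4))) \<and>
           cmod ((G ^^ (m - 1)) z) \<le> r"
      unfolding Let_def
    proof (intro impI)
      have Kdef: "(\<Prod>l\<in>{1..<i}. real_of_int (snd (quotient_of (x l)))) = K i" by (simp add: K_def qq_def)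
      assume disk: "cmod (z - (complex_of_real (real_of_rat (x i))
                      - \<i> * complex_of_real (((\<Prod>l\<in>{1..<i}. real_of_int (snd (quotient_of (x l)))) / real_of_int (snd (quotient_of (x i)))) * (ln 2 / (2 * pi)))))
             \<le> (ln 2 / (2 * pi)) * ((\<Prod>l\<in>{1..<i}. real_of_int (snd (quotient_of (x l)))) / real_of_int (snd (quotient_of (x i))))"
      have h2: "(2 * c * K i / qq i) / 2 = (K i / qq i) * c" by simp
      have zD: "inD (real_of_rat (x i)) (2 * c * K i / real_of_int (snd (quotient_of (x i)))) z"
        using disk unfolding inD_def Kdef h2[unfolded qq_def] c_def[symmetric] by (simp add: mult_ac qq_def)
      have KN: "K i * real N \<le> real_of_int (mcf_b (x i) 1)"
      proof (cases "i = 1")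
        case True
        then show ?thesis using QGd by (simp add: K_def)
      next
        case False
        then obtain j where j: "i = Suc j" "j \<ge> 1" using i by (cases i) auto
        have q1N: "qq 1 \<ge> real N" using qqb[of 1] QGd by simp
        have "K i * real N \<le> K i * qq 1" using q1N Kge1[of i] by (intro mult_left_mono) auto
        also have "\<dots> = (K j * qq 1) * qq j" using KSuc[OF j(2)] j(1) by (simp add: mult_ac)
        also have "\<dots> \<le> qq j * qq j" using inv[OF j(2)] qq1[of j] by (intro mult_right_mono) auto
        also have "\<dots> \<le> real_of_int (mcf_b (x i) 1)" using stp[OF j(2)] j(1) by (simp add: power2_eq_square)
        finally show ?thesis .
      qed
      have bsq: "\<forall>j. 1 \<le> j \<and> j \<le> mcf_len (x i) - 1 \<longrightarrow> mcf_b (x i) (j+1) \<ge> (mcf_b (x i) j)\<^sup>2"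
        using QGd i by auto
      show "(\<forall>n. n + 2 \<le> mcf_len (x i) \<longrightarrow>
              cmod ((G ^^ n) z) \<le> r \<and>
              (Re ((G ^^ n) z) > 0 \<longrightarrow> has_arg_in ((G ^^ n) z) (-pi/4) (pi/4)) \<and>
              (Re ((G ^^ n) z) < 0 \<longrightarrow> has_arg_in ((G ^^ n) z) (3*pi/4) (5*pi/4))) \<and>
           cmod ((G ^^ (mcf_len (x i) - 1)) z) \<le> r"
        by (rule core[OF xi[OF i] bsq Kge1[of i] KN N2 c0 c6 Nr assms(2) zD])
    qed
  qed
qed


end
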